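(* Let $\mu>1$ and for each $N\ge3$ set $\gamma=\mu\gamma_1^N$. Then $\lim_{N\to\infty}c_N=V(\mu)$, where $V(\mu)=\prod_{k=1}^\infty\frac{\mu k^2-1}{\mu k^2+2}$, and $0<V(\mu)<\infty$.
   Context: $\gamma^N_k=\frac{1}{2\sin^2(k\pi/N)}$ for $k\ge1$; $c_N=\big[1-\frac{3}{2+2\gamma}\big]^{e(N)/2}\prod_{k=1}^{\lfloor (N-1)/2\rfloor}\big[1-\frac{3}{2+\gamma/\gamma^N_k}\big]$, where $e(N)=1$ if $N$ is even and $0$ if $N$ is odd. *)

theory Defs
  imports "HOL-Analysis.Analysis"
begin

definition gammaN :: "nat \<Rightarrow> nat \<Rightarrow> real" where
  "gammaN N k = 1 / (2 * (sin (real k * pi / real N))^2)"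

definition eN :: "nat \<Rightarrow> real" where
  "eN N = (if even N then 1 else 0)"

definition cN :: "nat \<Rightarrow> real \<Rightarrow> real" where
  "cN N \<gamma> = (1 - 3 / (2 + 2 * \<gamma>)) powr (eN N / 2)
     * (\<Prod>k = 1..(N - 1) div 2. (1 - 3 / (2 + \<gamma> / gammaN N k)))"

definition Vfac :: "real \<Rightarrow> nat \<Rightarrow> real" where
  "Vfac \<mu> k = (\<mu> * (real k)^2 - 1) / (\<mu> * (real k)^2 + 2)"

definition V :: "real \<Rightarrow> real" where
  "V \<mu> = (\<Prod>k. Vfac \<mu> (Suc k))"

end

theory Submission imports Defs "HOL-Real_Asymp.Real_Asymp" begin

lemma sin_ge_third:
  fixes x :: real assumes "0 \<le> x" "x \<le> 2" shows "x / 3 \<le> sin x"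
proof -
  have h: "\<bar>sin x - (\<Sum>m<3. sin_coeff m * x ^ m)\<bar> \<le> inverse (fact 3) * \<bar>x\<bar> ^ 3"
    by (rule Maclaurin_sin_bound)
  have e1: "(\<Sum>m<3. sin_coeff m * x ^ m) = x"
    by (simp add: numeral_3_eq_3 sin_coeff_def)
  have f3: "(fact 3::real) = 6" by (simp add: fact_numeral)
  have e2: "inverse (fact 3) * \<bar>x\<bar> ^ 3 = x^3/6" unfolding f3 abs_of_nonneg[OF assms(1)] by simp
  have "\<bar>sin x - x\<bar> \<le> x^3/6" using h by (simp only: e1 e2)
  hence "x - x^3/6 \<le> sin x" by linarith
  moreover have "x^3 \<le> 4 * x"
  proof -
    have "x^2 \<le> 2^2" using assms by (intro power_mono) auto
    hence "x * x^2 \<le> x * 4" using assms by (intro mult_left_mono) auto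
    thus ?thesis by (simp add: power3_eq_cube power2_eq_square)
  qed
  ultimately show ?thesis by linarith
qed

lemma g_bound:
  fixes \<mu> y :: real assumes "\<mu> > 1" "y \<ge> 1"
  shows "0 < 1 - 3/(2+\<mu>*y)" "1 - 3/(2+\<mu>*y) < 1" "\<bar>ln (1 - 3/(2+\<mu>*y))\<bar> \<le> 3/((\<mu>-1)*y)"
    "1 - 3/(2+\<mu>*y) = (\<mu>*y-1)/(\<mu>*y+2)"
proof -
  have my: "\<mu>*y \<ge> \<mu>" using assms by (simp add: mult_le_cancel_left1)
  have pos: "\<mu>*y+2 > 0" "\<mu>*y - 1 > 0" using my assms by linarith+
  show eq: "1 - 3/(2+\<mu>*y) = (\<mu>*y-1)/(\<mu>*y+2)" using pos by (simp add: field_simps)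
  show p: "0 < 1 - 3/(2+\<mu>*y)" unfolding eq using pos by simp
  show l: "1 - 3/(2+\<mu>*y) < 1" using pos by simp
  have "ln (1 - 3/(2+\<mu>*y)) < 0" using p l by simp
  hence "\<bar>ln (1 - 3/(2+\<mu>*y))\<bar> = - ln ((\<mu>*y-1)/(\<mu>*y+2))" unfolding eq by linarith
  also have "\<dots> = ln ((\<mu>*y+2)/(\<mu>*y-1))" using pos by (simp add: ln_div)
  also have "\<dots> \<le> (\<mu>*y+2)/(\<mu>*y-1) - 1" using pos by (intro ln_le_minus_one) auto
  also have "\<dots> = 3/(\<mu>*y-1)"
  proof -
    have ne: "\<mu>*y - 1 \<noteq> 0" using pos by linarith
    show ?thesis using ne by (simp add: field_simps)
  qed
  also have "\<dots> \<le> 3/((\<mu>-1)*y)"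
  proof (rule divide_left_mono)
    show "(\<mu>-1)*y \<le> \<mu>*y - 1" using assms by (simp add: algebra_simps)
    show "0 < (\<mu>*y-1) * ((\<mu>-1)*y)" using assms pos by (intro mult_pos_pos) auto
  qed simp
  finally show "\<bar>ln (1 - 3/(2+\<mu>*y))\<bar> \<le> 3/((\<mu>-1)*y)" .
qed

lemma ratio_eq:
  "\<mu> * gammaN N 1 / gammaN N k = \<mu> * (sin (real k * pi / real N) / sin (pi / real N))^2"
  unfolding gammaN_def
  by (cases "sin (real k * pi / real N) = 0"; cases "sin (pi / real N) = 0")
     (simp_all add: field_simps power_divide)

lemma A_bounds:
  assumes "N \<ge> 3" "1 \<le> k" "k \<le> (N-1) div 2"
  shows "1 \<le> (sin (real k * pi / real N) / sin (pi / real N))^2"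
        "(real k)^2/9 \<le> (sin (real k * pi / real N) / sin (pi / real N))^2"
proof -
  have kN: "2*k \<le> N" using assms by linarith
  hence kN': "2 * real k \<le> real N" by linarith
  have Npos: "real N > 0" using assms by simp
  have x1pos: "0 < pi / real N" using Npos by simp
  have x1k: "pi / real N \<le> real k * pi / real N" using assms Npos
    by (intro divide_right_mono) auto
  have xk2: "real k * pi / real N \<le> pi/2"
  proof -
    have "real k * pi * 2 \<le> real N * pi" using kN' by (simp add: mult.commute mult_right_mono)
    thus ?thesis using Npos by (simp add: field_simps)
  qed
  have s1pos: "0 < sin (pi / real N)" using x1pos x1k xk2 pi_gt_zero by (intro sin_gt_zero) linarith+
  have s1k: "sin (pi / real N) \<le> sin (real k * pi / real N)"
    using x1pos x1k xk2 pi_gt_zero by (intro sin_monotone_2pi_le) linarith+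
  have r1: "1 \<le> sin (real k * pi / real N) / sin (pi / real N)" using s1pos s1k by simp
  show "1 \<le> (sin (real k * pi / real N) / sin (pi / real N))^2"
    using r1 by (simp add: one_le_power)
  have s1le: "sin (pi / real N) \<le> pi / real N" using x1pos by (intro sin_x_le_x) auto
  have skge: "(real k * pi / real N) / 3 \<le> sin (real k * pi / real N)"
    using xk2 x1pos x1k pi_less_4 by (intro sin_ge_third) linarith+
  have "real k / 3 = ((real k * pi / real N) / 3) / (pi / real N)" using Npos by (simp add: field_simps)
  also have "\<dots> \<le> sin (real k * pi / real N) / sin (pi / real N)"
    using skge s1le s1pos x1pos s1k by (intro frac_le) auto
  finally have "real k / 3 \<le> sin (real k * pi / real N) / sin (pi / real N)" .
  hence "(real k / 3)^2 \<le> (sin (real k * pi / real N) / sin (pi / real N))^2"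
    by (intro power_mono) auto
  thus "(real k)^2/9 \<le> (sin (real k * pi / real N) / sin (pi / real N))^2"
    by (simp add: power_divide)
qed

lemma sin_ratio_lim: "(\<lambda>N::nat. sin(real (Suc k)*pi/real N)/sin(pi/real N)) \<longlonglongrightarrow> real (Suc k)"
  by real_asymp

lemma sin_lim: "(\<lambda>N::nat. sin(pi/real N)) \<longlonglongrightarrow> 0"
  by real_asymp

theorem proposition3p2:
  fixes \<mu> :: real
  assumes "\<mu> > 1"
  shows "((\<lambda>N. cN N (\<mu> * gammaN N 1)) \<longlonglongrightarrow> V \<mu>)
         \<and> convergent_prod (\<lambda>k. Vfac \<mu> (Suc k)) \<and> 0 < V \<mu>"
proof -
  define A where "A N k = (sin (real k * pi / real N) / sin (pi / real N))^2" for N k :: nat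
  define a where "a k N = (if Suc k \<le> (N-1) div 2 then ln (1 - 3/(2+\<mu>*A N (Suc k))) else 0)" for k N :: nat
  define b where "b k = ln (Vfac \<mu> (Suc k))" for k :: nat
  define M where "M k = 27/(\<mu>-1) * inverse ((real (Suc k))^2)" for k :: nat
  have Vfac_eq: "Vfac \<mu> (Suc k) = 1 - 3/(2+\<mu>*(real (Suc k))^2)" for k
  proof -
    have "1 \<le> (real (Suc k))^2" by (simp add: one_le_power)
    from g_bound(4)[OF assms this] show ?thesis unfolding Vfac_def by (simp add: add.commute)
  qed
  have Vfac_pos: "0 < Vfac \<mu> (Suc k)" for k
  proof -
    have "1 \<le> (real (Suc k))^2" by (simp add: one_le_power)
    from g_bound(1)[OF assms this] show ?thesis unfolding Vfac_eq .
  qed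
  have lim: "(\<lambda>N. a k N) \<longlonglongrightarrow> b k" for k
  proof -
    have "(\<lambda>N. A N (Suc k)) \<longlonglongrightarrow> (real (Suc k))^2"
      unfolding A_def by (intro tendsto_power sin_ratio_lim)
    hence "(\<lambda>N. ln (1 - 3/(2+\<mu>*A N (Suc k)))) \<longlonglongrightarrow> ln (1 - 3/(2+\<mu>*(real (Suc k))^2))"
    proof (intro tendsto_intros)
      have "1 \<le> (real (Suc k))^2" by (simp add: one_le_power)
      from g_bound(1)[OF assms this] show "1 - 3/(2+\<mu>*(real (Suc k))^2) \<noteq> 0" by linarith
      have "0 < 2+\<mu>*(real (Suc k))^2" using assms by (intro add_pos_nonneg) auto
      thus "2+\<mu>*(real (Suc k))^2 \<noteq> 0" by simp
    qed
    hence "(\<lambda>N. ln (1 - 3/(2+\<mu>*A N (Suc k)))) \<longlonglongrightarrow> b k"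
      unfolding b_def Vfac_eq .
    moreover have "eventually (\<lambda>N. ln (1 - 3/(2+\<mu>*A N (Suc k))) = a k N) sequentially"
      by (rule eventually_sequentiallyI[of "2*k+5"]) (auto simp: a_def)
    ultimately show ?thesis by (rule Lim_transform_eventually)
  qed
  have bnd: "\<bar>a k N\<bar> \<le> M k" if "N \<ge> 3" for k N
  proof (cases "Suc k \<le> (N-1) div 2")
    case True
    have A1: "1 \<le> A N (Suc k)" and A2: "(real (Suc k))^2/9 \<le> A N (Suc k)"
      using A_bounds[OF that _ True] unfolding A_def by auto
    have sq: "0 < (real (Suc k))^2" by simp
    have "\<bar>a k N\<bar> \<le> 3/((\<mu>-1)*A N (Suc k))"
      using g_bound(3)[OF assms A1] True by (simp add: a_def)
    also have "\<dots> \<le> 3/((\<mu>-1)*((real (Suc k))^2/9))"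
      using A1 A2 assms sq by (intro divide_left_mono mult_left_mono mult_pos_pos) auto
    also have "\<dots> = M k" unfolding M_def using assms by (simp add: field_simps)
    finally show ?thesis .
  next
    case False
    thus ?thesis using assms by (simp add: a_def M_def)
  qed
  have summM: "summable M"
    unfolding M_def
    by (intro summable_mult) (use summable_Suc_iff[of "\<lambda>n. inverse ((real n)^2)"] inverse_power_summable[of 2] in auto)
  have ev: "eventually (\<lambda>(k,N). norm (a k N) \<le> M k) (at_top \<times>\<^sub>F sequentially)"
    unfolding eventually_prod_filter
    by (rule exI[of _ "\<lambda>_. True"], rule exI[of _ "\<lambda>N. N \<ge> 3"])
       (auto simp: eventually_sequentially intro!: bnd)
  from tannerys_theorem[OF lim ev summM] have
    T1: "summable (\<lambda>n. norm (b n))" and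
    T2: "(\<lambda>N. suminf (\<lambda>k. a k N)) \<longlonglongrightarrow> suminf b" by auto
  have sb: "summable b" using T1 by (rule summable_norm_cancel)
  have eb: "exp (b k) = Vfac \<mu> (Suc k)" for k unfolding b_def using Vfac_pos by simp
  have cp: "convergent_prod (\<lambda>k. Vfac \<mu> (Suc k))"
    using convergent_prod_exp[OF sb] unfolding eb .
  have Veq: "V \<mu> = exp (suminf b)"
    using prodinf_exp[OF sb] unfolding eb V_def .
  define base where "base N = 1 - 3 / (2 + 2 * (\<mu> * gammaN N 1))" for N :: nat
  have base_eq: "base N = 1 - 3 * (sin (pi / real N))^2 / (2 * (sin (pi / real N))^2 + \<mu>)"
    if "N \<ge> 3" for N
  proof -
    have Npos: "real N > 0" using that by simp
    have "0 < sin (pi / real N)" using that Npos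
      by (intro sin_gt_zero) (auto simp: field_simps)
    thus ?thesis unfolding base_def gammaN_def using assms by (simp add: field_simps)
  qed
  have base_bounds: "0 < base N \<and> base N \<le> 1" if "N \<ge> 3" for N
  proof -
    let ?s = "(sin (pi / real N))^2"
    have s1: "?s \<le> 1" by (simp add: abs_square_le_1 abs_sin_le_one)
    have s0: "0 \<le> ?s" by simp
    have d: "0 < 2 * ?s + \<mu>" using assms s0 by linarith
    have "3 * ?s / (2 * ?s + \<mu>) < 1" using d s1 assms by (simp add: divide_less_eq)
    moreover have "0 \<le> 3 * ?s / (2 * ?s + \<mu>)" using d s0 by simp
    ultimately show ?thesis unfolding base_eq[OF that] by linarith
  qed
  have base_lim: "base \<longlonglongrightarrow> 1"
  proof -
    have "(\<lambda>N. 1 - 3 * (sin (pi / real N))^2 / (2 * (sin (pi / real N))^2 + \<mu>)) \<longlonglongrightarrow> 1 - 3 * 0^2/(2*0^2+\<mu>)"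
      using assms by (intro tendsto_intros sin_lim) auto
    hence "(\<lambda>N. 1 - 3 * (sin (pi / real N))^2 / (2 * (sin (pi / real N))^2 + \<mu>)) \<longlonglongrightarrow> 1" by simp
    moreover have "eventually (\<lambda>N. 1 - 3 * (sin (pi / real N))^2 / (2 * (sin (pi / real N))^2 + \<mu>) = base N) sequentially"
      by (rule eventually_sequentiallyI[of 3]) (simp add: base_eq)
    ultimately show ?thesis by (rule Lim_transform_eventually)
  qed
  define ep where "ep N = base N powr (eN N / 2)" for N
  have ep_bounds: "base N \<le> ep N \<and> ep N \<le> 1" if "N \<ge> 3" for N
  proof (cases "even N")
    case True
    have b: "0 < base N" "base N \<le> 1" using base_bounds[OF that] by auto
    have "ep N = sqrt (base N)" unfolding ep_def eN_def using True b by (simp add: powr_half_sqrt)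
    moreover have "base N \<le> sqrt (base N)"
    proof (rule real_le_rsqrt)
      show "(base N)^2 \<le> base N" using b by (simp add: power2_eq_square mult_le_cancel_right1)
    qed
    moreover have "sqrt (base N) \<le> 1" using b by simp
    ultimately show ?thesis by simp
  next
    case False
    have b: "0 < base N" "base N \<le> 1" using base_bounds[OF that] by auto
    have "ep N = 1" unfolding ep_def eN_def using False b by simp
    thus ?thesis using b by simp
  qed
  have ep_lim: "ep \<longlonglongrightarrow> 1"
  proof (rule tendsto_sandwich[OF _ _ base_lim tendsto_const])
    show "eventually (\<lambda>N. base N \<le> ep N) sequentially"
      by (rule eventually_sequentiallyI[of 3]) (use ep_bounds in auto)
    show "eventually (\<lambda>N. ep N \<le> 1) sequentially"
      by (rule eventually_sequentiallyI[of 3]) (use ep_bounds in auto)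
  qed
  have cN_eq: "cN N (\<mu> * gammaN N 1) = ep N * exp (suminf (\<lambda>k. a k N))" if "N \<ge> 3" for N
  proof -
    let ?m = "(N-1) div 2"
    have pos: "0 < 1 - 3/(2+\<mu>*A N (Suc k))" if "k < ?m" for k
    proof -
      have "Suc k \<le> ?m" using that by simp
      from A_bounds(1)[OF \<open>N \<ge> 3\<close> _ this] have "1 \<le> A N (Suc k)" unfolding A_def by simp
      from g_bound(1)[OF assms this] show ?thesis .
    qed
    have "suminf (\<lambda>k. a k N) = (\<Sum>k<?m. a k N)"
      by (rule suminf_finite) (auto simp: a_def)
    also have "\<dots> = (\<Sum>k<?m. ln (1 - 3/(2+\<mu>*A N (Suc k))))"
      by (rule sum.cong) (auto simp: a_def)
    finally have "exp (suminf (\<lambda>k. a k N)) = (\<Prod>k<?m. exp (ln (1 - 3/(2+\<mu>*A N (Suc k)))))"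
      by (simp add: exp_sum)
    also have "\<dots> = (\<Prod>k<?m. 1 - 3/(2+\<mu>*A N (Suc k)))"
      by (rule prod.cong) (use pos in auto)
    also have "\<dots> = (\<Prod>k = 1..?m. 1 - 3/(2+\<mu>*gammaN N 1/gammaN N k))"
      unfolding A_def ratio_eq[symmetric] by (simp add: prod.atLeast1_atMost_eq)
    finally show ?thesis unfolding cN_def ep_def base_def by simp
  qed
  have "(\<lambda>N. ep N * exp (suminf (\<lambda>k. a k N))) \<longlonglongrightarrow> 1 * exp (suminf b)"
    by (intro tendsto_intros ep_lim T2)
  hence "(\<lambda>N. ep N * exp (suminf (\<lambda>k. a k N))) \<longlonglongrightarrow> V \<mu>" unfolding Veq by simp
  moreover have "eventually (\<lambda>N. ep N * exp (suminf (\<lambda>k. a k N)) = cN N (\<mu> * gammaN N 1)) sequentially"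
    by (rule eventually_sequentiallyI[of 3]) (rule cN_eq[symmetric])
  ultimately have "(\<lambda>N. cN N (\<mu> * gammaN N 1)) \<longlonglongrightarrow> V \<mu>" by (rule Lim_transform_eventually)
  moreover have "0 < V \<mu>" unfolding Veq by simp
  ultimately show ?thesis using cp by blast
qed

end
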